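(* Consider the system $\dot q=Mp$, $\dot p=-M^Tq-\nabla\psi(p)+Bu$ with $q,p\in\mathbb R^n$, where $M\in\mathbb R^{n\times n}$ is invertible, $B\in\mathbb R^{n\times m}$, and $\psi:\mathbb R^n\to\mathbb R$ is continuously differentiable with locally Lipschitz gradient, strictly convex, and satisfies $\lim_{\|x\|\to\infty}\psi(x)/\|x\|=\infty$. If the input $u\equiv\mathrm u\in\mathbb R^m$ is constant, then every trajectory satisfies $p(t)\to p_0=0$ and $q(t)\to q_0=(M^T)^{-1}B\mathrm u-(M^T)^{-1}\nabla\psi(0)$ as $t\to\infty$. *)

theory Defs
  imports "HOL-Analysis.Analysis"
begin

definition strictly_convex_on :: "'a::real_vector set \<Rightarrow> ('a \<Rightarrow> real) \<Rightarrow> bool" where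
  "strictly_convex_on S f \<longleftrightarrow>
     (\<forall>x\<in>S. \<forall>y\<in>S. \<forall>t::real. x \<noteq> y \<and> 0 < t \<and> t < 1 \<longrightarrow>
        f ((1 - t) *\<^sub>R x + t *\<^sub>R y) < (1 - t) * f x + t * f y)"

end

theory Submission
  imports Defs
begin

lemma strict_convex_imp_convex:
  fixes \<psi> :: "'a::real_vector \<Rightarrow> real"
  assumes "strictly_convex_on UNIV \<psi>"
  shows "convex_on UNIV \<psi>"
proof (rule convex_onI)
  fix x y :: 'a and t :: real assume t: "0 < t" "t < 1"
  show "\<psi> ((1 - t) *\<^sub>R x + t *\<^sub>R y) \<le> (1 - t) * \<psi> x + t * \<psi> y"
  proof (cases "x = y")
    case True
    have "(1 - t) *\<^sub>R x + t *\<^sub>R x = x" by (simp add: algebra_simps)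
    moreover have "(1 - t) * \<psi> x + t * \<psi> x = \<psi> x" by (simp add: algebra_simps)
    ultimately show ?thesis using True by simp
  next
    case False thus ?thesis using assms t unfolding strictly_convex_on_def by (simp add: less_imp_le)
  qed
qed auto

lemma tangent_below:
  fixes \<psi> :: "'a::real_inner \<Rightarrow> real"
  assumes conv: "convex_on UNIV \<psi>"
    and grad: "\<And>x. (\<psi> has_derivative (\<lambda>h. G x \<bullet> h)) (at x)"
  shows "G x \<bullet> (y - x) \<le> \<psi> y - \<psi> x"
proof -
  define \<phi> where "\<phi> s = \<psi> (x + s *\<^sub>R (y - x))" for s :: real
  have cphi: "convex_on UNIV \<phi>"
  proof (rule convex_onI)
    fix t a b :: real assume t: "0 < t" "t < 1"
    have "x + ((1 - t) * a + t * b) *\<^sub>R (y - x) = (1 - t) *\<^sub>R (x + a *\<^sub>R (y - x)) + t *\<^sub>R (x + b *\<^sub>R (y - x))"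
      by (simp add: algebra_simps)
    thus "\<phi> ((1 - t) *\<^sub>R a + t *\<^sub>R b) \<le> (1 - t) * \<phi> a + t * \<phi> b"
      using conv t unfolding convex_on_def \<phi>_def by auto
  qed auto
  have "((\<lambda>s. x + s *\<^sub>R (y - x)) has_derivative (\<lambda>h. h *\<^sub>R (y - x))) (at 0)"
    by (auto intro!: derivative_eq_intros)
  from has_derivative_compose[OF this grad[of "x + 0 *\<^sub>R (y - x)"]]
  have "(\<phi> has_derivative (\<lambda>h. G x \<bullet> (h *\<^sub>R (y - x)))) (at 0)"
    by (simp add: \<phi>_def[abs_def] o_def)
  moreover have "(\<lambda>h. G x \<bullet> (h *\<^sub>R (y - x))) = (*) (G x \<bullet> (y - x))"
    by (auto simp: fun_eq_iff)
  ultimately have "(\<phi> has_field_derivative (G x \<bullet> (y - x))) (at 0 within UNIV)"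
    unfolding has_field_derivative_def by simp
  from convex_on_imp_above_tangent[OF cphi _ _ _ this, of 1]
  have "\<phi> 1 - \<phi> 0 \<ge> G x \<bullet> (y - x)" by simp
  thus ?thesis by (simp add: \<phi>_def)
qed

lemma grad_strict_mono:
  fixes \<psi> :: "'a::real_inner \<Rightarrow> real"
  assumes sc: "strictly_convex_on UNIV \<psi>"
    and grad: "\<And>x. (\<psi> has_derivative (\<lambda>h. G x \<bullet> h)) (at x)"
    and xy: "x \<noteq> y"
  shows "(G x - G y) \<bullet> (x - y) > 0"
proof -
  have conv: "convex_on UNIV \<psi>" by (rule strict_convex_imp_convex[OF sc])
  define m where "m = (1 - 1/2) *\<^sub>R x + (1/2::real) *\<^sub>R y"
  have sm: "\<psi> m < (1 - 1/2) * \<psi> x + (1/2) * \<psi> y" 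
  proof -
    have "(0::real) < 1/2" "(1/2::real) < 1" by auto
    thus ?thesis using sc xy unfolding strictly_convex_on_def m_def by blast
  qed
  have hx: "(1/2::real) *\<^sub>R x + (1/2::real) *\<^sub>R x = x" "(1/2::real) *\<^sub>R y + (1/2::real) *\<^sub>R y = y"
    by (simp_all add: scaleR_add_left[symmetric])
  have m1: "m - x = (1/2::real) *\<^sub>R (y - x)" using hx by (simp add: m_def algebra_simps)
  have m2: "m - y = (1/2::real) *\<^sub>R (x - y)" using hx by (simp add: m_def algebra_simps)
  have t1: "G x \<bullet> (m - x) \<le> \<psi> m - \<psi> x" by (rule tangent_below[OF conv grad])
  have t2: "G y \<bullet> (m - y) \<le> \<psi> m - \<psi> y" by (rule tangent_below[OF conv grad])
  from t1 t2 sm have "G x \<bullet> (y - x) + G y \<bullet> (x - y) < 0"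
    unfolding m1 m2 by (simp add: inner_scaleR_right)
  thus ?thesis by (simp add: inner_diff_left inner_diff_right inner_commute algebra_simps)
qed


lemma barbalat:
  fixes f f' :: "real \<Rightarrow> 'a::real_normed_vector"
  assumes der: "\<And>t. t\<ge>0 \<Longrightarrow> (f has_vector_derivative f' t) (at t within {0..})"
    and lim: "(f \<longlongrightarrow> L) at_top"
    and uc: "uniformly_continuous_on {0..} f'"
  shows "(f' \<longlongrightarrow> 0) at_top"
proof (rule tendstoI)
  fix e :: real assume e: "e > 0"
  obtain d0 where d0: "d0 > 0" and d0c: "\<And>s t. s \<in> {0..} \<Longrightarrow> t \<in> {0..} \<Longrightarrow> dist s t < d0 \<Longrightarrow> dist (f' s) (f' t) < e/2"
    using uc e unfolding uniformly_continuous_on_def by (metis half_gt_zero)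
  define d where "d = d0/2"
  have d: "d > 0" "d < d0" using d0 by (auto simp: d_def)
  have "\<forall>\<^sub>F t in at_top. dist (f t) L < d*e/4" using tendstoD[OF lim, of "d*e/4"] d e by auto
  moreover have "\<forall>\<^sub>F t in at_top. dist (f (t+d)) L < d*e/4"
  proof -
    have "\<forall>\<^sub>F x in at_top. dist (f (d + x)) L < d*e/4"
      using tendstoD[OF filterlim_compose[OF lim filterlim_tendsto_add_at_top[OF tendsto_const filterlim_ident]], of "d*e/4"] d e
      by auto
    thus ?thesis by (simp add: add.commute)
  qed
  moreover have "\<forall>\<^sub>F t in at_top. t \<ge> (0::real)" by (rule eventually_ge_at_top)
  ultimately show "\<forall>\<^sub>F t in at_top. dist (f' t) 0 < e"
  proof eventually_elim
    case (elim t)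
    have "norm (f (t+d) - f t - (\<lambda>h. h *\<^sub>R f' t) ((t+d) - t)) \<le> norm ((t+d) - t) * (e/2)"
    proof (rule differentiable_bound_linearization[where S="{t..t+d}" and f'="\<lambda>x h. h *\<^sub>R f' x"])
      fix s :: real assume "s \<in> {0..1}" thus "t + s *\<^sub>R (t + d - t) \<in> {t..t+d}" using d
        by (auto simp: mult_left_le)
    next
      fix x assume x: "x \<in> {t..t+d}"
      thus "(f has_derivative (\<lambda>h. h *\<^sub>R f' x)) (at x within {t..t+d})"
        using der[of x] elim has_vector_derivative_within_subset[of f "f' x" x "{0..}" "{t..t+d}"]
        by (auto simp: has_vector_derivative_def)
    next
      fix x assume x: "x \<in> {t..t+d}"
      have "onorm ((\<lambda>h. h *\<^sub>R f' x) - (\<lambda>h. h *\<^sub>R f' t)) = onorm (\<lambda>h::real. h *\<^sub>R (f' x - f' t))"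
        by (simp add: fun_diff_def scaleR_diff_right)
      also have "\<dots> = norm (f' x - f' t)"
        using onorm_scaleR_left[OF bounded_linear_ident, of "f' x - f' t"] by (simp add: onorm_id)
      also have "\<dots> \<le> e/2" using d0c[of x t] x elim d by (auto simp: dist_norm less_imp_le)
      finally show "onorm ((\<lambda>h. h *\<^sub>R f' x) - (\<lambda>h. h *\<^sub>R f' t)) \<le> e/2" .
    next
      show "t \<in> {t..t+d}" using d by auto
    qed
    hence A: "norm (f (t+d) - f t - d *\<^sub>R f' t) \<le> d * e/2" using d by simp
    have "norm (f (t+d) - f t) \<le> dist (f (t+d)) L + dist (f t) L"
      using norm_triangle_ineq4[of "f (t+d) - L" "f t - L"] by (simp add: dist_norm)
    hence Bn: "norm (f (t+d) - f t) < d*e/2" using elim by simp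
    have "norm (d *\<^sub>R f' t) \<le> norm (f (t+d) - f t - d *\<^sub>R f' t) + norm (f (t+d) - f t)"
      using norm_triangle_ineq4[of "f (t+d) - f t" "f (t+d) - f t - d *\<^sub>R f' t"] by simp
    moreover have "norm (d *\<^sub>R f' t) = d * norm (f' t)" using d by simp
    ultimately have "d * norm (f' t) < d * e" using A Bn by linarith
    hence "norm (f' t) < e" using d by simp
    thus ?case by (simp add: dist_norm)
  qed
qed



lemma vd_uc:
  fixes f f' :: "real \<Rightarrow> 'a::real_normed_vector"
  assumes der: "\<And>t. t\<ge>0 \<Longrightarrow> (f has_vector_derivative f' t) (at t within {0..})"
    and bnd: "\<And>t. t \<ge> 0 \<Longrightarrow> norm (f' t) \<le> K"
  shows "uniformly_continuous_on {0..} f"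
proof -
  have K: "K \<ge> 0" using bnd[of 0] norm_ge_zero[of "f' 0"] by linarith
  have L: "norm (f s - f t) \<le> 3*K*\<bar>s - t\<bar>" if st: "s \<ge> 0" "t \<ge> 0" for s t
  proof -
    have "norm (f s - f t - (s - t) *\<^sub>R f' 0) \<le> norm (s - t) * (2*K)"
    proof (rule vector_differentiable_bound_linearization[where S="{0..}"])
      show "\<And>x. x \<in> {0..} \<Longrightarrow> (f has_vector_derivative f' x) (at x within {0..})" using der by auto
      show "closed_segment t s \<subseteq> {0..}" using st by (auto simp: closed_segment_eq_real_ivl)
      show "\<And>x. x \<in> {0..} \<Longrightarrow> norm (f' x - f' 0) \<le> 2*K"
        using bnd norm_triangle_ineq4 by (smt (verit) atLeast_iff order_refl)
      show "(0::real) \<in> {0..}" by simp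
    qed
    moreover have "norm ((s - t) *\<^sub>R f' 0) \<le> \<bar>s - t\<bar> * K" using bnd[of 0] by (simp add: mult_left_mono)
    moreover have "norm (f s - f t) \<le> norm (f s - f t - (s - t) *\<^sub>R f' 0) + norm ((s - t) *\<^sub>R f' 0)"
      using norm_triangle_ineq[of "f s - f t - (s - t) *\<^sub>R f' 0" "(s - t) *\<^sub>R f' 0"] by simp
    ultimately show ?thesis by (simp add: algebra_simps)
  qed
  show ?thesis unfolding uniformly_continuous_on_def
  proof (intro allI impI)
    fix e :: real assume e: "e > 0"
    show "\<exists>d>0. \<forall>x\<in>{0..}. \<forall>x'\<in>{0..}. dist x' x < d \<longrightarrow> dist (f x') (f x) < e"
    proof (intro exI[of _ "e/(3*K+1)"] conjI ballI impI)
      show "e/(3*K+1) > 0" using e K by simp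
      fix x x' :: real assume xx: "x \<in> {0..}" "x' \<in> {0..}" "dist x' x < e/(3*K+1)"
      have "dist (f x') (f x) \<le> 3*K*\<bar>x' - x\<bar>" using L[of x' x] xx by (simp add: dist_norm)
      also have "\<dots> \<le> (3*K+1)*\<bar>x' - x\<bar>" by (simp add: mult_right_mono)
      also have "\<dots> < (3*K+1) * (e/(3*K+1))" using xx K by (intro mult_strict_left_mono) (auto simp: dist_real_def)
      also have "\<dots> = e" using K by simp
      finally show "dist (f x') (f x) < e" .
    qed
  qed
qed

lemma uc_subset:
  fixes f :: "'a::metric_space \<Rightarrow> 'b::metric_space"
  assumes "uniformly_continuous_on T f" "S \<subseteq> T"
  shows "uniformly_continuous_on S f"
  using assms unfolding uniformly_continuous_on_def by (meson subsetD)

lemma uc_compose_compact: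
  fixes z :: "'a::metric_space \<Rightarrow> 'b::metric_space" and h :: "'b \<Rightarrow> 'c::metric_space"
  assumes uz: "uniformly_continuous_on S z" and zC: "\<And>t. t \<in> S \<Longrightarrow> z t \<in> C"
    and C: "compact C" and h: "continuous_on C h"
  shows "uniformly_continuous_on S (\<lambda>t. h (z t))"
  by (rule uniformly_continuous_on_compose[OF uz uc_subset[OF compact_uniformly_continuous[OF h C]]])
     (use zC in auto)

lemma antitone_lim:
  fixes W :: "real \<Rightarrow> real"
  assumes mono: "\<And>s t. 0 \<le> s \<Longrightarrow> s \<le> t \<Longrightarrow> W t \<le> W s"
    and lb: "\<And>t. t \<ge> 0 \<Longrightarrow> W t \<ge> 0"
  shows "\<exists>L. (W \<longlongrightarrow> L) at_top"
proof -
  define l where "l = Inf (W ` {0..})"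
  have bdd: "bdd_below (W ` {0..})" using lb by (auto intro!: bdd_belowI[of _ 0])
  have "(W \<longlongrightarrow> l) at_top"
  proof (rule decreasing_tendsto)
    show "\<forall>\<^sub>F n in at_top. l \<le> W n"
      using eventually_ge_at_top[of "0::real"]
      by eventually_elim (auto simp: l_def intro!: cInf_lower bdd)
  next
    fix x assume "l < x"
    then obtain t0 where t0: "t0 \<ge> 0" "W t0 < x"
      unfolding l_def by (subst (asm) cInf_less_iff) (auto simp: bdd)
    show "\<forall>\<^sub>F n in at_top. W n < x"
      using eventually_ge_at_top[of t0]
      by eventually_elim (use mono[of t0] t0 in fastforce)
  qed
  thus ?thesis by blast
qed

theorem mainTheorem14:
  fixes M :: "real^'n^'n" and B :: "real^'m^'n"
    and \<psi> :: "real^'n \<Rightarrow> real" and grad\<psi> :: "real^'n \<Rightarrow> real^'n"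
    and u :: "real^'m"
    and q p :: "real \<Rightarrow> real^'n"
  assumes M_inv: "invertible M"
    and grad: "\<And>x. (\<psi> has_derivative (\<lambda>h. grad\<psi> x \<bullet> h)) (at x)"
    and grad_cont: "continuous_on UNIV grad\<psi>"
    and grad_loclip: "\<And>x. \<exists>r>0. \<exists>L. L-lipschitz_on (cball x r) grad\<psi>"
    and strict_conv: "strictly_convex_on UNIV \<psi>"
    and coercive: "filterlim (\<lambda>x. \<psi> x / norm x) at_top at_infinity"
    and q_ode: "\<And>t. t \<ge> 0 \<Longrightarrow> (q has_vector_derivative (M *v p t)) (at t within {0..})"
    and p_ode: "\<And>t. t \<ge> 0 \<Longrightarrow>
        (p has_vector_derivative (- (transpose M *v q t) - grad\<psi> (p t) + B *v u)) (at t within {0..})"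
  shows "(p \<longlongrightarrow> 0) at_top \<and>
    (q \<longlongrightarrow> (matrix_inv (transpose M) *v (B *v u) - matrix_inv (transpose M) *v grad\<psi> 0)) at_top"
proof -
  define MT where "MT = transpose M"
  have MTinv: "invertible MT" using transpose_invertible[OF M_inv] by (simp add: MT_def)
  have MTi: "MT ** matrix_inv MT = mat 1 \<and> matrix_inv MT ** MT = mat 1"
    using someI_ex[OF MTinv[unfolded invertible_def]] unfolding matrix_inv_def by auto
  define q0 where "q0 = matrix_inv MT *v (B *v u - grad\<psi> 0)"
  have MTq0: "MT *v q0 = B *v u - grad\<psi> 0"
    by (simp add: q0_def matrix_vector_mul_assoc MTi)
  define P' where "P' t = - (MT *v q t) - grad\<psi> (p t) + B *v u" for t
  define g where "g y = y \<bullet> (grad\<psi> y - grad\<psi> 0)" for y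
  define W where "W t = (q t - q0) \<bullet> (q t - q0) + p t \<bullet> p t" for t
  have gpos: "g y > 0" if "y \<noteq> 0" for y
    using grad_strict_mono[OF strict_conv grad that] by (simp add: g_def inner_commute[of y])
  have gnn: "g y \<ge> 0" for y
    using gpos[of y] by (cases "y = 0") (auto simp: g_def)
  have dp: "\<And>t. t\<ge>0 \<Longrightarrow> (p has_vector_derivative P' t) (at t within {0..})"
    using p_ode by (simp add: P'_def MT_def)
  have key: "(q t - q0) \<bullet> (M *v p t) + p t \<bullet> P' t = - g (p t)" for t
  proof -
    have "P' t = - (MT *v (q t - q0)) - (grad\<psi> (p t) - grad\<psi> 0)"
      by (simp add: P'_def matrix_vector_mult_diff_distrib MTq0)
    moreover have "p t \<bullet> (MT *v w) = w \<bullet> (M *v p t)" for w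
      using dot_lmul_matrix[of w M "p t"] by (simp add: MT_def inner_commute)
    ultimately show ?thesis by (simp add: g_def inner_diff_right)
  qed
  have dW: "(W has_vector_derivative (- 2 * g (p t))) (at t within {0..})" if t: "t \<ge> 0" for t
  proof -
    have a: "((\<lambda>t. q t - q0) has_derivative (\<lambda>h. h *\<^sub>R (M *v p t))) (at t within {0..})"
      using q_ode[OF t] by (auto intro!: derivative_eq_intros simp: has_vector_derivative_def)
    have b: "(p has_derivative (\<lambda>h. h *\<^sub>R P' t)) (at t within {0..})"
      using dp[OF t] by (simp add: has_vector_derivative_def)
    have "(W has_derivative (\<lambda>h. (q t - q0) \<bullet> (h *\<^sub>R (M *v p t)) + (h *\<^sub>R (M *v p t)) \<bullet> (q t - q0) + (p t \<bullet> (h *\<^sub>R P' t) + (h *\<^sub>R P' t) \<bullet> p t))) (at t within {0..})"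
      unfolding W_def[abs_def]
      by (intro has_derivative_add has_derivative_inner a b)
    moreover have "(\<lambda>h. (q t - q0) \<bullet> (h *\<^sub>R (M *v p t)) + (h *\<^sub>R (M *v p t)) \<bullet> (q t - q0) + (p t \<bullet> (h *\<^sub>R P' t) + (h *\<^sub>R P' t) \<bullet> p t))
        = (\<lambda>h. h *\<^sub>R (- 2 * g (p t)))"
    proof
      fix h :: real
      have "(q t - q0) \<bullet> (h *\<^sub>R (M *v p t)) + (h *\<^sub>R (M *v p t)) \<bullet> (q t - q0) + (p t \<bullet> (h *\<^sub>R P' t) + (h *\<^sub>R P' t) \<bullet> p t)
          = 2 * h * ((q t - q0) \<bullet> (M *v p t) + p t \<bullet> P' t)"
        by (simp add: inner_commute[of "M *v p t"] inner_commute[of "P' t"] algebra_simps)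
      thus "(q t - q0) \<bullet> (h *\<^sub>R (M *v p t)) + (h *\<^sub>R (M *v p t)) \<bullet> (q t - q0) + (p t \<bullet> (h *\<^sub>R P' t) + (h *\<^sub>R P' t) \<bullet> p t)
          = h *\<^sub>R (- 2 * g (p t))" by (simp add: key)
    qed
    ultimately show ?thesis by (simp add: has_vector_derivative_def)
  qed
  have Wmono: "W t \<le> W s" if "0 \<le> s" "s \<le> t" for s t
  proof -
    have d: "(W has_derivative (\<lambda>h. h *\<^sub>R (- 2 * g (p x)))) (at x within {s..t})" if "s \<le> x" "x \<le> t" for x
    proof -
      have "(W has_vector_derivative (- 2 * g (p x))) (at x within {0..})" using dW \<open>0 \<le> s\<close> that by simp
      hence "(W has_vector_derivative (- 2 * g (p x))) (at x within {s..t})"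
        by (rule has_vector_derivative_within_subset) (use \<open>0 \<le> s\<close> in auto)
      thus ?thesis by (simp add: has_vector_derivative_def)
    qed
    obtain x where "x \<in> {s..t}" "W t - W s = (\<lambda>h. h *\<^sub>R (- 2 * g (p x))) (t - s)"
      using mvt_very_simple[OF \<open>s \<le> t\<close> d] by blast
    moreover have "(t - s) * (- 2 * g (p x)) \<le> 0"
      using gnn[of "p x"] that by (simp add: mult_nonneg_nonneg)
    ultimately show ?thesis by simp
  qed
  have Wnn: "W t \<ge> 0" for t by (simp add: W_def)
  define R where "R = sqrt (W 0)"
  have pR: "norm (p t) \<le> R" and qR: "norm (q t - q0) \<le> R" if "t \<ge> 0" for t
  proof -
    have "norm (p t) ^ 2 + norm (q t - q0) ^ 2 \<le> W 0"
      using Wmono[of 0 t] that by (simp add: W_def power2_norm_eq_inner)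
    moreover have "norm (p t) ^ 2 \<ge> 0" "norm (q t - q0) ^ 2 \<ge> 0" by simp_all
    ultimately have "norm (p t) ^ 2 \<le> W 0" "norm (q t - q0) ^ 2 \<le> W 0" by linarith+
    thus "norm (p t) \<le> R" "norm (q t - q0) \<le> R" unfolding R_def by (simp_all add: real_le_rsqrt)
  qed

  define z where "z t = (q t, p t)" for t
  define F where "F w = (M *v snd w, - (MT *v fst w) - grad\<psi> (snd w) + B *v u)" for w :: "(real^'n) \<times> (real^'n)"
  define C where "C = cball (0::real^'n) (norm q0 + R) \<times> cball (0::real^'n) R"
  have C: "compact C" unfolding C_def by (intro compact_Times compact_cball)
  have zC: "z t \<in> C" if "t \<in> {0..}" for t
  proof -
    have "norm (q t) \<le> norm q0 + R" using qR[of t] that norm_triangle_ineq2[of "q t" q0] by auto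
    thus ?thesis using pR[of t] that by (simp add: C_def z_def)
  qed
  have gc: "continuous_on UNIV grad\<psi>" by (rule grad_cont)
  have Fc: "continuous_on UNIV F" unfolding F_def
    by (intro continuous_intros continuous_on_compose2[OF gc]
        matrix_vector_mul_bounded_linear[THEN bounded_linear.continuous_on]) auto
  have dz: "(z has_vector_derivative F (z t)) (at t within {0..})" if "t \<ge> 0" for t
    unfolding z_def F_def using has_vector_derivative_Pair[OF q_ode[OF that] dp[OF that]]
    by (simp add: P'_def)
  obtain Kb where Kb: "\<And>w. w \<in> C \<Longrightarrow> norm (F w) \<le> Kb"
  proof -
    have "compact (F ` C)" by (rule compact_continuous_image[OF continuous_on_subset[OF Fc] C]) auto
    then obtain Kb where "\<forall>x\<in>F ` C. norm x \<le> Kb" using compact_imp_bounded bounded_iff by metis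
    thus ?thesis using that by auto
  qed
  have zuc: "uniformly_continuous_on {0..} z"
    by (rule vd_uc[OF dz, of Kb]) (auto intro: Kb zC)
  have gcont: "continuous_on UNIV g" unfolding g_def
    by (intro continuous_intros gc) 
  have Duc: "uniformly_continuous_on {0..} (\<lambda>t. - 2 * g (p t))"
  proof -
    have "continuous_on C (\<lambda>w. - 2 * g (snd w))"
      by (intro continuous_intros continuous_on_compose2[OF gcont]) auto
    from uc_compose_compact[OF zuc zC C this] show ?thesis by (simp add: z_def)
  qed
  obtain L where WL: "(W \<longlongrightarrow> L) at_top" using antitone_lim[of W] Wmono Wnn by blast
  have D0: "((\<lambda>t. - 2 * g (p t)) \<longlongrightarrow> 0) at_top" by (rule barbalat[OF dW WL Duc])
  have g0: "((\<lambda>t. g (p t)) \<longlongrightarrow> 0) at_top"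
    using tendsto_mult_right_zero[OF D0, of "- 1/2"] by simp
  have p0: "(p \<longlongrightarrow> 0) at_top"
  proof (rule tendstoI)
    fix e :: real assume e: "e > 0"
    define A where "A = cball (0::real^'n) R - ball 0 e"
    show "\<forall>\<^sub>F t in at_top. dist (p t) 0 < e"
    proof (cases "A = {}")
      case True
      show ?thesis using eventually_ge_at_top[of "0::real"]
      proof eventually_elim
        case (elim t) thus ?case using pR[of t] True by (auto simp: A_def dist_norm set_eq_iff)
      qed
    next
      case False
      have Ac: "compact A" unfolding A_def by (intro compact_diff compact_cball open_ball)
      obtain y0 where y0: "y0 \<in> A" "\<And>y. y \<in> A \<Longrightarrow> g y0 \<le> g y"
        using continuous_attains_inf[OF Ac False continuous_on_subset[OF gcont]] by auto
      have "y0 \<noteq> 0" using y0(1) e by (auto simp: A_def)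
      hence m: "g y0 > 0" by (rule gpos)
      show ?thesis using tendstoD[OF g0 m] eventually_ge_at_top[of "0::real"]
      proof eventually_elim
        case (elim t)
        have "p t \<notin> A" using y0(2)[of "p t"] elim gnn[of "p t"] by (auto simp: dist_norm)
        thus ?case using pR[of t] elim by (auto simp: A_def dist_norm)
      qed
    qed
  qed
  have P'uc: "uniformly_continuous_on {0..} P'"
  proof -
    have "continuous_on C (\<lambda>w. snd (F w))"
      by (intro continuous_intros continuous_on_subset[OF Fc]) auto
    from uc_compose_compact[OF zuc zC C this] show ?thesis by (simp add: z_def F_def P'_def[abs_def])
  qed
  have P'0: "(P' \<longlongrightarrow> 0) at_top" by (rule barbalat[OF dp p0 P'uc])
  have G0: "((\<lambda>t. grad\<psi> (p t)) \<longlongrightarrow> grad\<psi> 0) at_top"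
    using continuous_on_tendsto_compose[OF gc p0] by simp
  have "((\<lambda>t. B *v u - grad\<psi> (p t) - P' t) \<longlongrightarrow> B *v u - grad\<psi> 0 - 0) at_top"
    by (intro tendsto_intros G0 P'0)
  moreover have "B *v u - grad\<psi> (p t) - P' t = MT *v q t" for t by (simp add: P'_def)
  ultimately have "((\<lambda>t. MT *v q t) \<longlongrightarrow> B *v u - grad\<psi> 0) at_top" by simp
  from bounded_linear.tendsto[OF matrix_vector_mul_bounded_linear[of "matrix_inv MT"] this]
  have "((\<lambda>t. matrix_inv MT *v (MT *v q t)) \<longlongrightarrow> q0) at_top" by (simp add: q0_def)
  hence "(q \<longlongrightarrow> q0) at_top" by (simp add: matrix_vector_mul_assoc MTi)
  thus ?thesis using p0 by (simp add: q0_def MT_def matrix_vector_mult_diff_distrib)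
qed

end
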